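(* Let $m\ge 1$, $0\le\rho<\tfrac12$, and let $P_1\ge P_2\ge\dots\ge P_{2^m}$ be a probability distribution on $2^m$ words $\mathbf{w}_1,\dots,\mathbf{w}_{2^m}\in\{0,1\}^m$. Define $P_k^d=\sum_{j}\rho^{d(k,j)}(1-\rho)^{m-d(k,j)}P_j$, where $d(k,j)$ is the Hamming distance between $\mathbf{w}_k$ and $\mathbf{w}_j$, and assume $P_1^d\ge P_2^d\ge\dots\ge P_{2^m}^d$. Fix $1\le i<2^m$ and let $(N_i^e(t),N_i^d(t))_{t\ge t_0}$ be a Markov chain on $\mathbb{Z}^2$ with i.i.d. steps, where the probability $P^i_{\{x,y\}}$ of moving from $(N_i^e,N_i^d)$ to $(N_i^e+x,N_i^d+y)$, $x,y\in\{-1,0,1\}$, is: $P^i_{\{1,1\}}=(1-\rho)^{m}P_i$; $P^i_{\{-1,-1\}}=(1-\rho)^mP_{i+1}$; $P^i_{\{1,-1\}}=\rho^{d(i,i+1)}(1-\rho)^{m-d(i,i+1)}P_i$; $P^i_{\{-1,1\}}=\rho^{d(i+1,i)}(1-\rho)^{m-d(i+1,i)}P_{i+1}$; $P^i_{\{1,0\}}=\sum_{j\ne i,i+1}\rho^{d(i,j)}(1-\rho)^{m-d(i,j)}P_i$; $P^i_{\{-1,0\}}=\sum_{j\ne i,i+1}\rho^{d(i+1,j)}(1-\rho)^{m-d(i+1,j)}P_{i+1}$; $P^i_{\{0,1\}}=\sum_{j\ne i,i+1}\rho^{d(i,j)}(1-\rho)^{m-d(i,j)}P_j$; $P^i_{\{0,-1\}}=\sum_{j\ne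 i,i+1}\rho^{d(i+1,j)}(1-\rho)^{m-d(i+1,j)}P_j$; and $P^i_{\{0,0\}}=1-\sum_{(x,y)\ne(0,0)}P^i_{\{x,y\}}$. Suppose $N_i^e(t_0)>0$ and $N_i^d(t_0)>0$ (a stable pair). Let $Q_i(N_i^e(t_0),N_i^d(t_0))$ be the probability that there exists $t>t_0$ with $N_i^e(t)=0$ or $N_i^d(t)=0$. Then $$Q_i(N_i^e(t_0),N_i^d(t_0))\le\left(\frac{P_{i+1}}{P_i}\right)^{N_i^e(t_0)}+\left(\frac{P_{i+1}^d}{P_i^d}\right)^{N_i^d(t_0)}.$$
   Context: This models a rate-1 direct shaping code with parsing length $m$ on SLC flash modeled as a binary symmetric channel with crossover probability $\rho$: i.i.d. input words $\mathbf{w}_k$ with probabilities $P_k$; $N_i^e(t)=n_i^e(t)-n_{i+1}^e(t)$ is the difference between the encoder counts of the $i$th and $(i+1)$st words and $N_i^d(t)$ the analogous difference of decoder counts; when the dictionary is stable, $P_k^d$ is the probability that the decoder outputs $\mathbf{w}_k$. The pair's evolution is modeled by the random walk in the claim. *)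

theory Defs
  imports "HOL-Probability.Probability"
begin

definition hamming :: "bool list \<Rightarrow> bool list \<Rightarrow> nat" where
  "hamming u v = card {l. l < length u \<and> u ! l \<noteq> v ! l}"

definition bsc :: "real \<Rightarrow> nat \<Rightarrow> nat \<Rightarrow> real" where
  "bsc \<rho> m d = \<rho> ^ d * (1 - \<rho>) ^ (m - d)"

definition cw :: "real \<Rightarrow> nat \<Rightarrow> (nat \<Rightarrow> bool list) \<Rightarrow> nat \<Rightarrow> nat \<Rightarrow> real" where
  "cw \<rho> m w k j = bsc \<rho> m (hamming (w k) (w j))"

definition Pdec :: "real \<Rightarrow> nat \<Rightarrow> (nat \<Rightarrow> bool list) \<Rightarrow> (nat \<Rightarrow> real) \<Rightarrow> nat \<Rightarrow> real" where
  "Pdec \<rho> m w P k = (\<Sum>j\<in>{1..2^m}. cw \<rho> m w k j * P j)"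

definition step_prob :: "real \<Rightarrow> nat \<Rightarrow> (nat \<Rightarrow> bool list) \<Rightarrow> (nat \<Rightarrow> real) \<Rightarrow> nat
    \<Rightarrow> int \<Rightarrow> int \<Rightarrow> real" where
  "step_prob \<rho> m w P i x y =
    (let R = {1..2^m} - {i, i+1};
         p11 = (1 - \<rho>) ^ m * P i;
         pmm = (1 - \<rho>) ^ m * P (i+1);
         p1m = cw \<rho> m w i (i+1) * P i;
         pm1 = cw \<rho> m w (i+1) i * P (i+1);
         p10 = (\<Sum>j\<in>R. cw \<rho> m w i j * P i);
         pm0 = (\<Sum>j\<in>R. cw \<rho> m w (i+1) j * P (i+1));
         p01 = (\<Sum>j\<in>R. cw \<rho> m w i j * P j);
         p0m = (\<Sum>j\<in>R. cw \<rho> m w (i+1) j * P j)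
     in if (x, y) = (1, 1) then p11
        else if (x, y) = (-1, -1) then pmm
        else if (x, y) = (1, -1) then p1m
        else if (x, y) = (-1, 1) then pm1
        else if (x, y) = (1, 0) then p10
        else if (x, y) = (-1, 0) then pm0
        else if (x, y) = (0, 1) then p01
        else if (x, y) = (0, -1) then p0m
        else if (x, y) = (0, 0) then 1 - (p11 + pmm + p1m + pm1 + p10 + pm0 + p01 + p0m)
        else 0)"

definition walk :: "nat \<Rightarrow> nat \<Rightarrow> (int \<times> int) stream \<Rightarrow> nat \<Rightarrow> int \<times> int" where
  "walk a b \<omega> n = (int a + (\<Sum>k<n. fst (\<omega> !! k)), int b + (\<Sum>k<n. snd (\<omega> !! k)))"

definition hit_prob :: "(int \<times> int) pmf \<Rightarrow> nat \<Rightarrow> nat \<Rightarrow> real" where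
  "hit_prob S a b = measure (stream_space (measure_pmf S))
     {\<omega> \<in> space (stream_space (measure_pmf S)).
        \<exists>n>0. fst (walk a b \<omega> n) = 0 \<or> snd (walk a b \<omega> n) = 0}"

end

theory Submission
  imports Defs
begin


definition hitG :: "('a \<Rightarrow> int) \<Rightarrow> int \<Rightarrow> nat \<Rightarrow> 'a stream set" where
  "hitG g a n = {\<omega>. \<exists>k\<le>n. a + (\<Sum>j<k. g (\<omega> !! j)) \<le> 0}"

lemma hitG_meas: "hitG g a n \<in> sets (stream_space (measure_pmf S))"
proof -
  let ?M = "stream_space (measure_pmf S)"
  have f: "(\<lambda>\<omega>. \<Sum>j<k. real_of_int (g (\<omega> !! j))) \<in> borel_measurable ?M" for k
    by (intro borel_measurable_sum measurable_compose[OF measurable_snth]) simp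
  have s: "{\<omega> \<in> space ?M. (\<Sum>j<k. real_of_int (g (\<omega> !! j))) \<in> {.. - real_of_int a}} \<in> sets ?M" for k
    using measurable_sets[OF f[of k], of "{.. - real_of_int a}"] by (simp add: vimage_def Int_def conj_commute)
  have "hitG g a n = (\<Union>k\<in>{..n}. {\<omega> \<in> space ?M. (\<Sum>j<k. real_of_int (g (\<omega> !! j))) \<in> {.. - real_of_int a}})"
    unfolding hitG_def space_stream_space by (auto simp flip: of_int_sum)
  also have "\<dots> \<in> sets ?M"
    using s by (intro sets.finite_UN) auto
  finally show ?thesis .
qed

lemma hitG_Suc:
  assumes "a > 0"
  shows "(x ## X \<in> hitG g a (Suc n)) = (X \<in> hitG g (a + g x) n)"
proof
  assume "x ## X \<in> hitG g a (Suc n)"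
  then obtain k where k: "k \<le> Suc n" "a + (\<Sum>j<k. g ((x ## X) !! j)) \<le> 0" by (auto simp: hitG_def)
  then obtain k' where "k = Suc k'" using assms by (cases k) auto
  have e: "(\<Sum>j<Suc k'. g ((x ## X) !! j)) = g x + (\<Sum>j<k'. g (X !! j))"
    by (subst sum.lessThan_Suc_shift) simp
  with k \<open>k = Suc k'\<close> show "X \<in> hitG g (a + g x) n" unfolding hitG_def
    by (auto intro!: exI[of _ k'])
next
  assume "X \<in> hitG g (a + g x) n"
  then obtain k where k: "k \<le> n" "a + g x + (\<Sum>j<k. g (X !! j)) \<le> 0" by (auto simp: hitG_def)
  have e: "(\<Sum>j<Suc k. g ((x ## X) !! j)) = g x + (\<Sum>j<k. g (X !! j))"
    by (subst sum.lessThan_Suc_shift) simp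
  with k show "x ## X \<in> hitG g a (Suc n)" unfolding hitG_def
    by (auto intro!: exI[of _ "Suc k"])
qed

lemma step_ineq:
  fixes p q z r :: real and a :: int
  assumes "a > 0" "0 \<le> q" "q \<le> p" "r = q / p"
  shows "p * r ^ nat (a+1) + q * r ^ nat (a - 1) + (1 - p - q) * r ^ nat a \<le> r ^ nat a"
proof -
  obtain b where b: "nat a = Suc b" using assms(1) by (cases "nat a") auto
  have 1: "nat (a+1) = Suc (Suc b)" "nat (a - 1) = b" using b by auto
  have "p * r = q"
  proof (cases "p = 0")
    case True then show ?thesis using assms by (simp)
  next
    case False then show ?thesis using assms by simp
  qed
  then have "p * r ^ nat (a+1) + q * r ^ nat (a - 1) + (1 - p - q) * r ^ nat a = r ^ nat a"
    unfolding 1 b by (simp add: algebra_simps) (metis mult.assoc mult.commute)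
  then show ?thesis by simp
qed

lemma ruin_G:
  fixes S :: "'a pmf" and g :: "'a \<Rightarrow> int" and A :: "'a set" and p q :: real
  assumes fin: "finite A" and sup: "set_pmf S \<subseteq> A" and gv: "\<forall>x\<in>A. g x \<in> {-1,0,1}"
    and p: "p = (\<Sum>x\<in>{x\<in>A. g x = 1}. pmf S x)"
    and q: "q = (\<Sum>x\<in>{x\<in>A. g x = -1}. pmf S x)" and qp: "q \<le> p"
  shows "emeasure (stream_space (measure_pmf S)) (hitG g a n) \<le> ennreal ((q/p) ^ nat a)"
proof (induction n arbitrary: a)
  define r where "r = q / p"
  define z where "z = (\<Sum>x\<in>{x\<in>A. g x = 0}. pmf S x)"
  interpret SS: prob_space "stream_space (measure_pmf S)"
    by (rule prob_space.prob_space_stream_space[OF prob_space_measure_pmf])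
  have q0: "0 \<le> q" unfolding q by (simp add: sum_nonneg)
  have r0: "0 \<le> r" unfolding r_def using q0 qp by simp
  have le1: "emeasure (stream_space (measure_pmf S)) X \<le> ennreal ((q/p) ^ nat a)" if "a \<le> 0" for X a
    using that SS.emeasure_le_1 by simp
  have decomp: "\<And>f. (\<Sum>x\<in>A. pmf S x * f (g x)) = p * f 1 + q * f (-1) + z * f 0"
  proof -
    fix f :: "int \<Rightarrow> real"
    have "(\<Sum>x\<in>A. pmf S x * f (g x)) = (\<Sum>x\<in>A. (if g x = 1 then pmf S x else 0) * f 1
       + (if g x = -1 then pmf S x else 0) * f (-1) + (if g x = 0 then pmf S x else 0) * f 0)"
      using gv by (intro sum.cong) auto
    also have "\<dots> = p * f 1 + q * f (-1) + z * f 0"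
      unfolding p q z_def sum.distrib sum_distrib_right[symmetric] using fin
      by (simp add: sum.inter_filter)
    finally show "(\<Sum>x\<in>A. pmf S x * f (g x)) = p * f 1 + q * f (-1) + z * f 0" .
  qed
  have z: "z = 1 - p - q"
    using decomp[of "\<lambda>_. 1"] sum_pmf_eq_1[OF fin sup] by simp
  {
    case 0
    show ?case
    proof (cases "a \<le> 0")
      case True then show ?thesis using le1 by blast
    next
      case False
      then have "hitG g a 0 = {}" by (auto simp: hitG_def)
      then show ?thesis by simp
    qed
  next
    case (Suc n)
    show ?case
    proof (cases "a \<le> 0")
      case True then show ?thesis using le1 by blast
    next
      case False
      then have a0: "a > 0" by simp
      have "emeasure (stream_space (measure_pmf S)) (hitG g a (Suc n))
          = (\<integral>\<^sup>+t. emeasure (stream_space (measure_pmf S)) {x\<in>space (stream_space (measure_pmf S)). t ## x \<in> hitG g a (Suc n)} \<partial>measure_pmf S)"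
        by (rule prob_space.emeasure_stream_space[OF prob_space_measure_pmf]) (rule hitG_meas)
      also have "\<dots> = (\<integral>\<^sup>+t. emeasure (stream_space (measure_pmf S)) (hitG g (a + g t) n) \<partial>measure_pmf S)"
        using a0 by (simp add: hitG_Suc space_stream_space)
      also have "\<dots> \<le> (\<integral>\<^sup>+t. ennreal (r ^ nat (a + g t)) \<partial>measure_pmf S)"
        using Suc.IH unfolding r_def by (intro nn_integral_mono) auto
      also have "\<dots> = (\<Sum>t\<in>A. ennreal (r ^ nat (a + g t)) * pmf S t)"
        using fin sup by (intro nn_integral_measure_pmf_support) auto
      also have "\<dots> = ennreal (\<Sum>t\<in>A. pmf S t * r ^ nat (a + g t))"
        using r0 by (subst sum_ennreal[symmetric]) (auto simp: ennreal_mult'' mult.commute intro!: sum.cong)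
      also have "\<dots> = ennreal (p * r ^ nat (a+1) + q * r ^ nat (a - 1) + (1 - p - q) * r ^ nat a)"
        using decomp[of "\<lambda>k. r ^ nat (a + k)"] z by simp
      also have "\<dots> \<le> ennreal (r ^ nat a)"
        using step_ineq[OF a0 q0 qp r_def] by (rule ennreal_leI)
      finally show ?thesis unfolding r_def .
    qed
  }
qed



lemma hamming_sum: "hamming u v = (\<Sum>l<length u. if u ! l \<noteq> v ! l then 1 else 0)"
proof -
  have "{l. l < length u \<and> u ! l \<noteq> v ! l} = {l\<in>{..<length u}. u ! l \<noteq> v ! l}" by auto
  then show ?thesis unfolding hamming_def by (simp add: sum.inter_filter[symmetric])
qed

lemma hamming_self: "hamming u u = 0" by (simp add: hamming_def)

lemma hamming_sym: "length u = length v \<Longrightarrow> hamming u v = hamming v u"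
  unfolding hamming_def by metis

lemma hamming_Cons: "hamming (b # u) (c # v) = (if b \<noteq> c then 1 else 0) + hamming u v"
  unfolding hamming_sum length_Cons sum.lessThan_Suc_shift by simp

lemma hamming_le: "hamming u v \<le> length u"
  unfolding hamming_sum by (rule order_trans[OF sum_mono[of _ _ "\<lambda>_. 1"]]) auto

lemma bsc_sum_one:
  fixes \<rho> :: real
  shows "(\<Sum>v\<in>{xs. length xs = length u}. \<rho> ^ hamming u v * (1 - \<rho>) ^ (length u - hamming u v)) = 1"
proof (induction u)
  case Nil
  then show ?case by (simp add: hamming_def)
next
  case (Cons b u)
  let ?n = "length u"
  let ?f = "\<lambda>v. \<rho> ^ hamming u v * (1 - \<rho>) ^ (?n - hamming u v)"
  have L: "{xs. length xs = Suc ?n} = (\<lambda>(c,v). c # v) ` (UNIV \<times> {xs::bool list. length xs = ?n})"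
    by (auto simp: length_Suc_conv image_def)
  have inj: "inj_on (\<lambda>(c,v). c # (v::bool list)) X" for X by (auto simp: inj_on_def)
  have "(\<Sum>v\<in>{xs. length xs = length (b # u)}. \<rho> ^ hamming (b # u) v * (1 - \<rho>) ^ (length (b # u) - hamming (b # u) v))
      = (\<Sum>(c,v)\<in>UNIV \<times> {xs::bool list. length xs = ?n}. \<rho> ^ hamming (b # u) (c # v) * (1 - \<rho>) ^ (Suc ?n - hamming (b # u) (c # v)))"
    unfolding length_Cons L by (subst sum.reindex[OF inj]) (simp add: case_prod_beta)
  also have "\<dots> = (\<Sum>c\<in>UNIV. \<Sum>v\<in>{xs::bool list. length xs = ?n}. \<rho> ^ hamming (b # u) (c # v) * (1 - \<rho>) ^ (Suc ?n - hamming (b # u) (c # v)))"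
    by (simp add: sum.cartesian_product)
  also have "\<dots> = (\<Sum>c\<in>UNIV. (if b = c then 1 - \<rho> else \<rho>) * (\<Sum>v\<in>{xs::bool list. length xs = ?n}. ?f v))"
  proof (intro sum.cong refl)
    fix c
    show "(\<Sum>v\<in>{xs::bool list. length xs = ?n}. \<rho> ^ hamming (b # u) (c # v) * (1 - \<rho>) ^ (Suc ?n - hamming (b # u) (c # v)))
       = (if b = c then 1 - \<rho> else \<rho>) * (\<Sum>v\<in>{xs::bool list. length xs = ?n}. ?f v)"
      unfolding sum_distrib_left
    proof (intro sum.cong refl)
      fix v :: "bool list" assume "v \<in> {xs. length xs = ?n}"
      have h: "hamming u v \<le> ?n" by (rule hamming_le)
      then have "Suc ?n - hamming u v = Suc (?n - hamming u v)" by (rule Suc_diff_le)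
      then show "\<rho> ^ hamming (b # u) (c # v) * (1 - \<rho>) ^ (Suc ?n - hamming (b # u) (c # v))
          = (if b = c then 1 - \<rho> else \<rho>) * ?f v"
        by (simp add: hamming_Cons)
    qed
  qed
  also have "\<dots> = 1" using Cons.IH by (simp add: UNIV_bool)
  finally show ?case .
qed


lemma ruin:
  fixes S :: "'a pmf" and g :: "'a \<Rightarrow> int" and A :: "'a set" and p q :: real
  assumes fin: "finite A" and sup: "set_pmf S \<subseteq> A" and gv: "\<forall>x\<in>A. g x \<in> {-1,0,1}"
    and p: "p = (\<Sum>x\<in>{x\<in>A. g x = 1}. pmf S x)"
    and q: "q = (\<Sum>x\<in>{x\<in>A. g x = -1}. pmf S x)" and qp: "q \<le> p"
  shows "measure (stream_space (measure_pmf S)) (\<Union>n. hitG g a n) \<le> (q/p) ^ nat a"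
proof -
  interpret SS: prob_space "stream_space (measure_pmf S)"
    by (rule prob_space.prob_space_stream_space[OF prob_space_measure_pmf])
  have q0: "0 \<le> q" unfolding q by (simp add: sum_nonneg)
  have r0: "0 \<le> (q/p) ^ nat a" using q0 qp by simp
  have inc: "incseq (\<lambda>n. hitG g a n)"
    unfolding incseq_def hitG_def by (auto intro: le_trans)
  have "emeasure (stream_space (measure_pmf S)) (\<Union>n. hitG g a n)
      = (SUP n. emeasure (stream_space (measure_pmf S)) (hitG g a n))"
  proof -
    have rng: "range (\<lambda>n. hitG g a n) \<subseteq> sets (stream_space (measure_pmf S))" using hitG_meas by blast
    show ?thesis using SUP_emeasure_incseq[OF rng inc] by simp
  qed
  also have "\<dots> \<le> ennreal ((q/p) ^ nat a)"
    by (rule SUP_least) (rule ruin_G[OF assms])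
  finally show ?thesis using r0 by (simp add: SS.emeasure_eq_measure ennreal_le_iff)
qed





theorem lemma1:
  fixes m :: nat and \<rho> :: real and P :: "nat \<Rightarrow> real" and w :: "nat \<Rightarrow> bool list"
    and i :: nat and S :: "(int \<times> int) pmf" and Ne Nd :: nat
  assumes m: "m \<ge> 1"
    and rho: "0 \<le> \<rho>" "\<rho> < 1/2"
    and words: "bij_betw w {1..2^m} {xs. length xs = m}"
    and P_nonneg: "\<forall>k\<in>{1..2^m}. P k \<ge> 0"
    and P_sum: "(\<Sum>k\<in>{1..2^m}. P k) = 1"
    and P_dec: "\<forall>k. 1 \<le> k \<and> k < 2^m \<longrightarrow> P (k+1) \<le> P k"
    and Pd_dec: "\<forall>k. 1 \<le> k \<and> k < 2^m \<longrightarrow> Pdec \<rho> m w P (k+1) \<le> Pdec \<rho> m w P k"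
    and i: "1 \<le> i" "i < 2^m"
    and S: "\<forall>x\<in>{-1,0,1}. \<forall>y\<in>{-1,0,1}. pmf S (x, y) = step_prob \<rho> m w P i x y"
    and start: "Ne > 0" "Nd > 0"
  shows "hit_prob S Ne Nd \<le> (P (i+1) / P i) ^ Ne + (Pdec \<rho> m w P (i+1) / Pdec \<rho> m w P i) ^ Nd"
  proof -
  interpret SS: prob_space "stream_space (measure_pmf S)"
    by (rule prob_space.prob_space_stream_space[OF prob_space_measure_pmf])
  define R where "R = {1..2^m} - {i, i+1}"
  define c where "c = cw \<rho> m w"
  have iI: "i \<in> {1..2^m}" "i+1 \<in> {1..2^m}" using i by auto
  have len: "length (w k) = m" if "k \<in> {1..2^m}" for k
    using bij_betw_apply[OF words that] by simp
  have csum: "(\<Sum>j\<in>{1..2^m}. c k j) = 1" if "k \<in> {1..2^m}" for k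
  proof -
    have "(\<Sum>j\<in>{1..2^m}. c k j) = (\<Sum>j\<in>{1..2^m}. (\<lambda>v. bsc \<rho> m (hamming (w k) v)) (w j))"
      unfolding c_def cw_def by simp
    also have "\<dots> = (\<Sum>v\<in>{xs. length xs = m}. bsc \<rho> m (hamming (w k) v))"
      by (rule sum.reindex_bij_betw[OF words])
    also have "\<dots> = 1" using bsc_sum_one[of \<rho> "w k"] len[OF that] by (simp add: bsc_def)
    finally show ?thesis .
  qed
  have cself: "c k k = (1 - \<rho>)^m" for k by (simp add: c_def cw_def bsc_def hamming_self)
  have csym: "c i (i+1) = c (i+1) i" unfolding c_def cw_def using hamming_sym len iI by metis
  have split: "(\<Sum>j\<in>{1..2^m}. f j) = f i + f (i+1) + (\<Sum>j\<in>R. f j)" for f :: "nat \<Rightarrow> real"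
  proof -
    have "(\<Sum>j\<in>{1..2^m}. f j) = (\<Sum>j\<in>R. f j) + (\<Sum>j\<in>{i, i+1}. f j)"
      unfolding R_def by (rule sum.subset_diff) (use iI in auto)
    then show ?thesis by simp
  qed
  have S': "pmf S (x, y) = step_prob \<rho> m w P i x y" if "x \<in> {-1,0,1}" "y \<in> {-1,0,1}" for x y
    using S that by blast
  define p11 where "p11 = (1 - \<rho>) ^ m * P i"
  define pmm where "pmm = (1 - \<rho>) ^ m * P (i+1)"
  define p1m where "p1m = c i (i+1) * P i"
  define pm1 where "pm1 = c (i+1) i * P (i+1)"
  define p10 where "p10 = (\<Sum>j\<in>R. c i j * P i)"
  define pm0 where "pm0 = (\<Sum>j\<in>R. c (i+1) j * P (i+1))"
  define p01 where "p01 = (\<Sum>j\<in>R. c i j * P j)"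
  define p0m where "p0m = (\<Sum>j\<in>R. c (i+1) j * P j)"
  note defs = p11_def pmm_def p1m_def pm1_def p10_def pm0_def p01_def p0m_def R_def c_def
  have e11: "pmf S (1,1) = p11" using S'[of 1 1] by (simp add: step_prob_def Let_def defs)
  have emm: "pmf S (-1,-1) = pmm" using S'[of "-1" "-1"] by (simp add: step_prob_def Let_def defs)
  have e1m: "pmf S (1,-1) = p1m" using S'[of 1 "-1"] by (simp add: step_prob_def Let_def defs)
  have em1: "pmf S (-1,1) = pm1" using S'[of "-1" 1] by (simp add: step_prob_def Let_def defs)
  have e10: "pmf S (1,0) = p10" using S'[of 1 0] by (simp add: step_prob_def Let_def defs)
  have em0: "pmf S (-1,0) = pm0" using S'[of "-1" 0] by (simp add: step_prob_def Let_def defs)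
  have e01: "pmf S (0,1) = p01" using S'[of 0 1] by (simp add: step_prob_def Let_def defs)
  have e0m: "pmf S (0,-1) = p0m" using S'[of 0 "-1"] by (simp add: step_prob_def Let_def defs)
  have e00: "pmf S (0,0) = 1 - (p11 + pmm + p1m + pm1 + p10 + pm0 + p01 + p0m)"
    using S'[of 0 0] by (simp add: step_prob_def Let_def defs)
  define A :: "(int \<times> int) set" where "A = {-1,0,1} \<times> {-1,0,1}"
  have finA: "finite A" by (simp add: A_def)
  have sumA: "(\<Sum>x\<in>A. pmf S x) = 1"
    unfolding A_def by (simp add: e11 emm e1m em1 e10 em0 e01 e0m e00)
  have supA: "set_pmf S \<subseteq> A"
  proof
    fix x assume x: "x \<in> set_pmf S"
    show "x \<in> A"
    proof (rule ccontr)
      assume "x \<notin> A"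
      then have "measure (measure_pmf S) (insert x A) = pmf S x + 1"
        using finA sumA by (simp add: measure_measure_pmf_finite)
      moreover have "pmf S x > 0" using x by (simp add: set_pmf_iff pmf_positive)
      moreover have "measure (measure_pmf S) (insert x A) \<le> 1" by (rule measure_pmf.prob_le_1)
      ultimately show False by simp
    qed
  qed
  have F1: "{x\<in>A. fst x = 1} = {(1,-1),(1,0),(1,1)}" unfolding A_def by auto
  have Fm: "{x\<in>A. fst x = -1} = {(-1,-1),(-1,0),(-1,1)}" unfolding A_def by auto
  have S1: "{x\<in>A. snd x = 1} = {(-1,1),(0,1),(1,1)}" unfolding A_def by auto
  have Sm: "{x\<in>A. snd x = -1} = {(-1,-1),(0,-1),(1,-1)}" unfolding A_def by auto
  have pe: "(\<Sum>x\<in>{x\<in>A. fst x = 1}. pmf S x) = P i"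
  proof -
    have "(\<Sum>x\<in>{x\<in>A. fst x = 1}. pmf S x) = p1m + p10 + p11" unfolding F1 by (simp add: e1m e10 e11)
    also have "\<dots> = P i * (\<Sum>j\<in>{1..2^m}. c i j)"
      unfolding split[of "c i"] by (simp add: defs sum_distrib_left cself[unfolded c_def] algebra_simps)
    finally show ?thesis using csum[OF iI(1)] by simp
  qed
  have qe: "(\<Sum>x\<in>{x\<in>A. fst x = -1}. pmf S x) = P (i+1)"
  proof -
    have "(\<Sum>x\<in>{x\<in>A. fst x = -1}. pmf S x) = pmm + pm0 + pm1" unfolding Fm by (simp add: emm em0 em1)
    also have "\<dots> = P (i+1) * (\<Sum>j\<in>{1..2^m}. c (i+1) j)"
      unfolding split[of "c (i+1)"] by (simp add: defs sum_distrib_left cself[unfolded c_def] algebra_simps)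
    finally show ?thesis using csum[OF iI(2)] by simp
  qed
  have pd: "(\<Sum>x\<in>{x\<in>A. snd x = 1}. pmf S x) = Pdec \<rho> m w P i"
  proof -
    have "(\<Sum>x\<in>{x\<in>A. snd x = 1}. pmf S x) = pm1 + p01 + p11" unfolding S1 by (simp add: em1 e01 e11)
    also have "\<dots> = Pdec \<rho> m w P i"
      unfolding Pdec_def c_def[symmetric] split[of "\<lambda>j. c i j * P j"] using csym cself
      by (simp add: defs algebra_simps)
    finally show ?thesis .
  qed
  have qd: "(\<Sum>x\<in>{x\<in>A. snd x = -1}. pmf S x) = Pdec \<rho> m w P (i+1)"
  proof -
    have "(\<Sum>x\<in>{x\<in>A. snd x = -1}. pmf S x) = pmm + p0m + p1m" unfolding Sm by (simp add: emm e0m e1m)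
    also have "\<dots> = Pdec \<rho> m w P (i+1)"
      unfolding Pdec_def c_def[symmetric] split[of "\<lambda>j. c (i+1) j * P j"] using csym cself
      by (simp add: defs algebra_simps)
    finally show ?thesis .
  qed
  have gvf: "\<forall>x\<in>A. fst x \<in> {-1,0,1}" and gvs: "\<forall>x\<in>A. snd x \<in> {-1,0,1}" unfolding A_def by auto
  have B1: "measure (stream_space (measure_pmf S)) (\<Union>n. hitG fst (int Ne) n) \<le> (P (i+1) / P i) ^ Ne"
  proof -
    have "measure (stream_space (measure_pmf S)) (\<Union>n. hitG fst (int Ne) n) \<le> (P (i+1) / P i) ^ nat (int Ne)"
      by (rule ruin[OF finA supA gvf pe[symmetric] qe[symmetric]]) (use P_dec i in auto)
    then show ?thesis by simp
  qed
  have B2: "measure (stream_space (measure_pmf S)) (\<Union>n. hitG snd (int Nd) n) \<le> (Pdec \<rho> m w P (i+1) / Pdec \<rho> m w P i) ^ Nd"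
  proof -
    have "measure (stream_space (measure_pmf S)) (\<Union>n. hitG snd (int Nd) n) \<le> (Pdec \<rho> m w P (i+1) / Pdec \<rho> m w P i) ^ nat (int Nd)"
      by (rule ruin[OF finA supA gvs pd[symmetric] qd[symmetric]]) (use Pd_dec i in auto)
    then show ?thesis by simp
  qed
  let ?U = "(\<Union>n. hitG fst (int Ne) n) \<union> (\<Union>n. hitG snd (int Nd) n)"
  have Um: "(\<Union>n. hitG g a n) \<in> sets (stream_space (measure_pmf S))" for g :: "int \<times> int \<Rightarrow> int" and a
    using hitG_meas by blast
  have sub: "{\<omega> \<in> space (stream_space (measure_pmf S)).
        \<exists>n>0. fst (walk Ne Nd \<omega> n) = 0 \<or> snd (walk Ne Nd \<omega> n) = 0} \<subseteq> ?U"
  proof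
    fix \<omega> assume "\<omega> \<in> {\<omega> \<in> space (stream_space (measure_pmf S)).
        \<exists>n>0. fst (walk Ne Nd \<omega> n) = 0 \<or> snd (walk Ne Nd \<omega> n) = 0}"
    then obtain n where "fst (walk Ne Nd \<omega> n) = 0 \<or> snd (walk Ne Nd \<omega> n) = 0" by blast
    then have "int Ne + (\<Sum>k<n. fst (\<omega> !! k)) = 0 \<or> int Nd + (\<Sum>k<n. snd (\<omega> !! k)) = 0"
      by (simp add: walk_def)
    then have "\<omega> \<in> hitG fst (int Ne) n \<or> \<omega> \<in> hitG snd (int Nd) n"
      unfolding hitG_def by auto
    then show "\<omega> \<in> ?U" by blast
  qed
  have "hit_prob S Ne Nd \<le> measure (stream_space (measure_pmf S)) ?U"
    unfolding hit_prob_def by (rule SS.finite_measure_mono[OF sub]) (use Um in auto)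
  also have "\<dots> \<le> measure (stream_space (measure_pmf S)) (\<Union>n. hitG fst (int Ne) n)
       + measure (stream_space (measure_pmf S)) (\<Union>n. hitG snd (int Nd) n)"
    by (rule measure_subadditive) (use Um in auto)
  finally show ?thesis using B1 B2 by linarith
qed

end
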